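(* Let $\mathcal{H},\mathcal{K}$ be complex Hilbert spaces and $(f_*,f^* ):(\mathsf{P}(\mathcal{H}),\mathsf{L}(\mathcal{H}),\bar e_{\mathcal{H}})\to(\mathsf{P}(\mathcal{K}),\mathsf{L}(\mathcal{K}),\bar e_{\mathcal{K}})$ a Chu morphism. Define $f^{\rightarrow}:\mathsf{L}(\mathcal{H})\to\mathsf{L}(\mathcal{K})$ by $f^{\rightarrow}(S)=\bigvee\{f_*([\psi]):\psi\in S,\psi\ne0\}$ (join in the lattice $\mathsf{L}(\mathcal{K})$). Then $f^{\rightarrow}$ is left adjoint to $f^*$: for all $S\in\mathsf{L}(\mathcal{H})$ and $T\in\mathsf{L}(\mathcal{K})$, $f^{\rightarrow}(S)\subseteq T$ if and only if $S\subseteq f^*(T)$.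
   Context: A Chu morphism $(X,A,e)\to(X',A',e')$ between Chu spaces over $[0,1]$ is a pair $(f_*:X\to X',f^*:A'\to A)$ with $e(x,f^*(a'))=e'(f_*(x),a')$ for all $x,a'$. For a complex Hilbert space $\mathcal{H}$: $\mathsf{L}(\mathcal{H})$ is the lattice of closed subspaces ordered by inclusion, $P_S$ the orthogonal projector onto $S$, $\mathsf{P}(\mathcal{H})$ the set of rays $[\psi]=\{\lambda\psi:\lambda\in\mathbb{C}\}$, $\psi\ne0$, and $\bar e_{\mathcal{H}}([\psi],S)=\|P_S\psi\|^2/\|\psi\|^2$. *)

theory Defs
  imports "HOL-Analysis.Analysis"
begin

text \<open>HOL-Analysis only provides real inner product spaces, so a complex
pre-Hilbert space is introduced as a type class: a real normed vector space
carrying a complex scalar multiplication (compatible with the real one) and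
a sesquilinear, conjugate-symmetric inner product (linear in the second
argument) whose induced norm is the given norm.\<close>

class complex_inner = real_normed_vector +
  fixes scaleC :: "complex \<Rightarrow> 'a \<Rightarrow> 'a" (infixr "*\<^sub>C" 75)
    and cinner :: "'a \<Rightarrow> 'a \<Rightarrow> complex"
  assumes scaleC_add_right: "a *\<^sub>C (x + y) = a *\<^sub>C x + a *\<^sub>C y"
    and scaleC_add_left: "(a + b) *\<^sub>C x = a *\<^sub>C x + b *\<^sub>C x"
    and scaleC_scaleC: "a *\<^sub>C (b *\<^sub>C x) = (a * b) *\<^sub>C x"
    and scaleC_one: "1 *\<^sub>C x = x"
    and scaleR_scaleC: "scaleR r x = complex_of_real r *\<^sub>C x"
    and cinner_commute: "cinner x y = cnj (cinner y x)"
    and cinner_add_right: "cinner x (y + z) = cinner x y + cinner x z"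
    and cinner_scaleC_right: "cinner x (a *\<^sub>C y) = a * cinner x y"
    and cinner_self_norm: "cinner x x = complex_of_real ((norm x)\<^sup>2)"

class chilbert = complex_inner + complete_space

definition csubspace :: "'a::complex_inner set \<Rightarrow> bool" where
  "csubspace S \<longleftrightarrow> 0 \<in> S \<and> (\<forall>x\<in>S. \<forall>y\<in>S. x + y \<in> S) \<and> (\<forall>c. \<forall>x\<in>S. c *\<^sub>C x \<in> S)"

definition closed_subspaces :: "'a::complex_inner set set" where
  "closed_subspaces = {S. csubspace S \<and> closed S}"

definition L_Sup :: "'a::complex_inner set set \<Rightarrow> 'a set" where
  "L_Sup F = \<Inter>{T \<in> closed_subspaces. \<forall>A\<in>F. A \<subseteq> T}"

definition proj :: "'a::complex_inner set \<Rightarrow> 'a \<Rightarrow> 'a" where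
  "proj S \<psi> = (THE p. p \<in> S \<and> (\<forall>s\<in>S. cinner s (\<psi> - p) = 0))"

definition ray :: "'a::complex_inner \<Rightarrow> 'a set" where
  "ray \<psi> = {c *\<^sub>C \<psi> | c. True}"

definition rays :: "'a::complex_inner set set" where
  "rays = {ray \<psi> | \<psi>. \<psi> \<noteq> 0}"

text \<open>\<open>ebar([\<psi>], S) = \<parallel>P_S \<psi>\<parallel>^2 / \<parallel>\<psi>\<parallel>^2\<close>, computed with a nonzero representative
of the ray (independent of the representative).\<close>
definition ebar :: "'a::complex_inner set \<Rightarrow> 'a set \<Rightarrow> real" where
  "ebar r S = (let \<psi> = (SOME \<psi>. \<psi> \<noteq> 0 \<and> ray \<psi> = r) in (norm (proj S \<psi>))\<^sup>2 / (norm \<psi>)\<^sup>2)"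

definition chu_morphism ::
  "'x set \<Rightarrow> 'a set \<Rightarrow> ('x \<Rightarrow> 'a \<Rightarrow> real) \<Rightarrow> 'y set \<Rightarrow> 'b set \<Rightarrow> ('y \<Rightarrow> 'b \<Rightarrow> real)
   \<Rightarrow> ('x \<Rightarrow> 'y) \<Rightarrow> ('b \<Rightarrow> 'a) \<Rightarrow> bool" where
  "chu_morphism X A e X' A' e' f_low f_up \<longleftrightarrow>
     (\<forall>x\<in>X. f_low x \<in> X') \<and> (\<forall>a'\<in>A'. f_up a' \<in> A) \<and>
     (\<forall>x\<in>X. \<forall>a'\<in>A'. e x (f_up a') = e' (f_low x) a')"

definition f_direct :: "('a::complex_inner set \<Rightarrow> 'b::complex_inner set) \<Rightarrow> 'a set \<Rightarrow> 'b set" where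
  "f_direct f_low S = L_Sup {f_low (ray \<psi>) | \<psi>. \<psi> \<in> S \<and> \<psi> \<noteq> 0}"

end

theory Submission imports Defs begin

lemma scaleC_zero_right[simp]: "a *\<^sub>C (0::'a::complex_inner) = 0"
  using scaleC_add_right[of a "0::'a" 0] by simp
lemma scaleC_zero_left[simp]: "0 *\<^sub>C (x::'a::complex_inner) = 0"
  using scaleC_add_left[of 0 0 x] by simp
lemma scaleC_minus_right: "a *\<^sub>C (- (x::'a::complex_inner)) = - (a *\<^sub>C x)"
  using scaleC_add_right[of a x "-x"] by (simp add: eq_neg_iff_add_eq_0 add.commute)
lemma scaleC_diff_right: "a *\<^sub>C ((x::'a::complex_inner) - y) = a *\<^sub>C x - a *\<^sub>C y"
  using scaleC_add_right[of a x "-y"] by (simp add: scaleC_minus_right)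
lemma minus_scaleC: "- (x::'a::complex_inner) = (-1) *\<^sub>C x"
  using scaleR_scaleC[of "-1" x] by simp
lemma cinner_zero_right[simp]: "cinner x (0::'a::complex_inner) = 0"
  using cinner_add_right[of x "0::'a" 0] by simp
lemma cinner_minus_right: "cinner x (- (y::'a::complex_inner)) = - cinner x y"
  using cinner_add_right[of x y "-y"] by (simp add: eq_neg_iff_add_eq_0 add.commute)
lemma cinner_diff_right: "cinner x ((y::'a::complex_inner) - z) = cinner x y - cinner x z"
  using cinner_add_right[of x y "-z"] by (simp add: cinner_minus_right)
lemma cinner_add_left: "cinner ((x::'a::complex_inner) + y) z = cinner x z + cinner y z"
  by (metis cinner_commute cinner_add_right complex_cnj_add)
lemma cinner_scaleC_left: "cinner (a *\<^sub>C (x::'a::complex_inner)) y = cnj a * cinner x y"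
  by (metis cinner_commute cinner_scaleC_right complex_cnj_mult)
lemma cinner_zero_left[simp]: "cinner (0::'a::complex_inner) x = 0"
  by (metis cinner_commute cinner_zero_right complex_cnj_zero)
lemma cinner_diff_left: "cinner ((x::'a::complex_inner) - y) z = cinner x z - cinner y z"
  by (metis cinner_commute cinner_diff_right complex_cnj_diff)
lemma norm_sq_Re: "(norm (x::'a::complex_inner))\<^sup>2 = Re (cinner x x)"
  by (simp add: cinner_self_norm)
lemma cinner_self_eq_0: "cinner (x::'a::complex_inner) x = 0 \<longleftrightarrow> x = 0"
  by (simp add: cinner_self_norm)
lemma Re_cinner_sym: "Re (cinner (y::'a::complex_inner) x) = Re (cinner x y)"
  by (subst cinner_commute) simp
lemma norm_add_sq: "(norm ((x::'a::complex_inner) + y))\<^sup>2 = (norm x)\<^sup>2 + (norm y)\<^sup>2 + 2 * Re (cinner x y)"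
  unfolding norm_sq_Re by (simp add: cinner_add_left cinner_add_right Re_cinner_sym[of y x])
lemma norm_diff_sq: "(norm ((x::'a::complex_inner) - y))\<^sup>2 = (norm x)\<^sup>2 + (norm y)\<^sup>2 - 2 * Re (cinner x y)"
  unfolding norm_sq_Re by (simp add: cinner_diff_left cinner_diff_right Re_cinner_sym[of y x])
lemma norm_scaleC_sq: "(norm (a *\<^sub>C (x::'a::complex_inner)))\<^sup>2 = (cmod a)\<^sup>2 * (norm x)\<^sup>2"
proof -
  have "cinner (a *\<^sub>C x) (a *\<^sub>C x) = (cnj a * a) * cinner x x"
    by (simp add: cinner_scaleC_left cinner_scaleC_right)
  also have "cnj a * a = of_real ((cmod a)\<^sup>2)" by (metis complex_norm_square mult.commute)
  finally show ?thesis unfolding norm_sq_Re by (simp add: cinner_self_norm)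
qed


lemma csub_diff: "csubspace S \<Longrightarrow> x \<in> S \<Longrightarrow> y \<in> S \<Longrightarrow> x - y \<in> S"
  unfolding csubspace_def by (metis minus_scaleC diff_conv_add_uminus)
lemma csub_scaleR: "csubspace S \<Longrightarrow> x \<in> S \<Longrightarrow> scaleR r x \<in> S"
  unfolding csubspace_def by (simp add: scaleR_scaleC)
lemma csub_add: "csubspace S \<Longrightarrow> x \<in> S \<Longrightarrow> y \<in> S \<Longrightarrow> x + y \<in> S"
  unfolding csubspace_def by blast
lemma csub_scaleC: "csubspace S \<Longrightarrow> x \<in> S \<Longrightarrow> c *\<^sub>C x \<in> S"
  unfolding csubspace_def by blast
lemma csub_zero: "csubspace S \<Longrightarrow> 0 \<in> S"
  unfolding csubspace_def by blast

lemma parallelogram: "(norm ((x::'a::complex_inner) + y))\<^sup>2 + (norm (x - y))\<^sup>2 = 2 * (norm x)\<^sup>2 + 2 * (norm y)\<^sup>2"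
  by (simp add: norm_add_sq norm_diff_sq)

lemma proj_unique:
  assumes S: "csubspace S" and p: "p \<in> S" "\<forall>s\<in>S. cinner s (\<psi> - p) = 0"
    and q: "q \<in> S" "\<forall>s\<in>S. cinner s (\<psi> - q) = 0"
  shows "p = q"
proof -
  have d: "p - q \<in> S" using csub_diff[OF S p(1) q(1)] .
  have "cinner (p - q) ((\<psi> - q) - (\<psi> - p)) = 0"
    using p(2) q(2) d by (simp add: cinner_diff_right)
  then have "cinner (p - q) (p - q) = 0" by simp
  then show ?thesis by (simp add: cinner_self_eq_0)
qed

lemma proj_eq:
  assumes S: "csubspace S" and p: "p \<in> S" "\<forall>s\<in>S. cinner s (\<psi> - p) = 0"
  shows "proj S \<psi> = p"
  unfolding proj_def
  by (rule the_equality) (use p proj_unique[OF S] in blast)+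

lemma orth_from_min:
  assumes S: "csubspace S" and p: "p \<in> S"
    and m: "\<forall>s\<in>S. (norm (\<psi> - p))\<^sup>2 \<le> (norm (\<psi> - s))\<^sup>2"
    and s: "s \<in> S"
  shows "cinner s (\<psi> - p) = 0"
proof (cases "s = 0")
  case True then show ?thesis by simp
next
  case False
  define r where "r = \<psi> - p"
  define c where "c = cinner s r"
  define N where "N = (norm s)\<^sup>2"
  have N: "N > 0" using False by (simp add: N_def)
  define t where "t = c / complex_of_real N"
  have "p + t *\<^sub>C s \<in> S" using S p s by (simp add: csub_add csub_scaleC)
  then have le: "(norm r)\<^sup>2 \<le> (norm (r - t *\<^sub>C s))\<^sup>2"
    using m unfolding r_def by (metis diff_diff_eq)
  have "(norm (r - t *\<^sub>C s))\<^sup>2 = (norm r)\<^sup>2 + (cmod t)\<^sup>2 * N - 2 * Re (t * cinner r s)"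
    by (simp add: norm_diff_sq norm_scaleC_sq cinner_scaleC_right N_def)
  also have "cinner r s = cnj c" unfolding c_def by (rule cinner_commute)
  also have "(cmod t)\<^sup>2 * N = (cmod c)\<^sup>2 / N"
    using N by (simp add: t_def norm_divide power_divide power2_eq_square)
  also have "Re (t * cnj c) = (cmod c)\<^sup>2 / N"
  proof -
    have "t * cnj c = (c * cnj c) / complex_of_real N" by (simp add: t_def)
    also have "c * cnj c = complex_of_real ((cmod c)\<^sup>2)" by (metis complex_norm_square)
    finally show ?thesis by (simp add: Re_divide_of_real)
  qed
  finally have "(cmod c)\<^sup>2 / N \<le> 0" using le by simp
  then have "cmod c = 0" using N
    by (metis divide_le_0_iff linorder_not_less power2_less_eq_zero_iff zero_less_power2 order_antisym_conv not_less)
  then show ?thesis by (simp add: c_def r_def)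
qed


lemma min_exists:
  fixes \<psi> :: "'a::chilbert"
  assumes S: "csubspace S" "closed S"
  shows "\<exists>p\<in>S. \<forall>s\<in>S. (norm (\<psi> - p))\<^sup>2 \<le> (norm (\<psi> - s))\<^sup>2"
proof -
  define V where "V = (\<lambda>s. (norm (\<psi> - s))\<^sup>2) ` S"
  define D where "D = Inf V"
  have ne: "V \<noteq> {}" using csub_zero[OF S(1)] by (auto simp: V_def)
  have bdd: "bdd_below V" unfolding V_def by (rule bdd_belowI[of _ 0]) auto
  have lower: "D \<le> (norm (\<psi> - s))\<^sup>2" if "s \<in> S" for s
    unfolding D_def using bdd that by (auto simp: V_def intro: cInf_lower)
  have "\<exists>s\<in>S. (norm (\<psi> - s))\<^sup>2 < D + inverse (real (Suc n))" for n
  proof -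
    have "Inf V < D + inverse (real (Suc n))" by (simp add: D_def)
    from cInf_lessD[OF ne this] show ?thesis by (auto simp: V_def)
  qed
  then obtain x where x: "\<And>n. x n \<in> S" "\<And>n. (norm (\<psi> - x n))\<^sup>2 < D + inverse (real (Suc n))"
    by metis
  have mid: "(norm (x m - x n))\<^sup>2 \<le> 2 * inverse (real (Suc m)) + 2 * inverse (real (Suc n))" for m n
  proof -
    define a where "a = \<psi> - x m"
    define b where "b = \<psi> - x n"
    define z where "z = scaleR (1/2) (x m + x n)"
    have zS: "z \<in> S" unfolding z_def using S x by (simp add: csub_add csub_scaleR)
    have "a + b = scaleR 2 (\<psi> - z)" by (simp add: a_def b_def z_def algebra_simps scaleR_2)
    then have ab: "(norm (a + b))\<^sup>2 = 4 * (norm (\<psi> - z))\<^sup>2"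
      by (simp add: power2_eq_square)
    have "a - b = x n - x m" by (simp add: a_def b_def)
    then have "(norm (x m - x n))\<^sup>2 = (norm (a - b))\<^sup>2" by (simp add: norm_minus_commute)
    also have "\<dots> = 2 * (norm a)\<^sup>2 + 2 * (norm b)\<^sup>2 - (norm (a + b))\<^sup>2"
      using parallelogram[of a b] by simp
    also have "\<dots> \<le> 2 * (D + inverse (real (Suc m))) + 2 * (D + inverse (real (Suc n))) - 4 * D"
    proof -
      have "(norm a)\<^sup>2 < D + inverse (real (Suc m))" using x(2)[of m] by (simp add: a_def)
      moreover have "(norm b)\<^sup>2 < D + inverse (real (Suc n))" using x(2)[of n] by (simp add: b_def)
      ultimately show ?thesis using lower[OF zS] ab by argo
    qed
    finally show ?thesis by simp
  qed
  have "Cauchy x"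
  proof (rule CauchyI)
    fix e :: real assume e: "0 < e"
    obtain M where M: "inverse (real (Suc M)) < e\<^sup>2 / 4"
      using reals_Archimedean[of "e\<^sup>2/4"] e by auto
    show "\<exists>M. \<forall>m\<ge>M. \<forall>n\<ge>M. norm (x m - x n) < e"
    proof (intro exI allI impI)
      fix m n assume mn: "M \<le> m" "M \<le> n"
      have "inverse (real (Suc m)) \<le> inverse (real (Suc M))"
        using mn by (simp add: le_imp_inverse_le)
      moreover have "inverse (real (Suc n)) \<le> inverse (real (Suc M))"
        using mn by (simp add: le_imp_inverse_le)
      ultimately have "(norm (x m - x n))\<^sup>2 < e\<^sup>2" using mid[of m n] M by linarith
      then show "norm (x m - x n) < e" using e by (simp add: power_less_imp_less_base)
    qed
  qed
  then obtain p where p: "x \<longlonglongrightarrow> p" using Cauchy_convergent_iff convergent_def by blast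
  have pS: "p \<in> S" using closed_sequentially[OF S(2) x(1) p] .
  have t1: "(\<lambda>n. (norm (\<psi> - x n))\<^sup>2) \<longlonglongrightarrow> (norm (\<psi> - p))\<^sup>2"
    by (intro tendsto_intros p)
  have t2: "(\<lambda>n. D + inverse (real (Suc n))) \<longlonglongrightarrow> D + 0"
    by (intro tendsto_intros LIMSEQ_inverse_real_of_nat)
  have "(norm (\<psi> - p))\<^sup>2 \<le> D + 0"
    by (rule LIMSEQ_le[OF t1 t2]) (use x(2) less_imp_le in blast)
  then show ?thesis using pS lower by (metis add_0_right order_trans)
qed

lemma proj_exists:
  fixes \<psi> :: "'a::chilbert"
  assumes S: "csubspace S" "closed S"
  shows "proj S \<psi> \<in> S \<and> (\<forall>s\<in>S. cinner s (\<psi> - proj S \<psi>) = 0)"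
proof -
  obtain p where p: "p \<in> S" "\<forall>s\<in>S. (norm (\<psi> - p))\<^sup>2 \<le> (norm (\<psi> - s))\<^sup>2"
    using min_exists[OF S] by blast
  have o: "\<forall>s\<in>S. cinner s (\<psi> - p) = 0" using orth_from_min[OF S(1) p] by blast
  show ?thesis using proj_eq[OF S(1) p(1) o] p(1) o by simp
qed


lemma in_ray_self: "\<psi> \<in> ray \<psi>"
  unfolding ray_def by (metis (mono_tags) mem_Collect_eq scaleC_one)

lemma ray_subset_iff: "csubspace T \<Longrightarrow> ray \<psi> \<subseteq> T \<longleftrightarrow> \<psi> \<in> T"
  using in_ray_self[of \<psi>] by (auto simp: ray_def csub_scaleC)

lemma ray_eq_mem:
  assumes S: "csubspace S" and r: "ray \<psi> = ray \<phi>"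
  shows "\<psi> \<in> S \<longleftrightarrow> \<phi> \<in> S"
  using ray_subset_iff[OF S, of \<psi>] ray_subset_iff[OF S, of \<phi>] r by simp

lemma ebar_one_iff:
  fixes \<phi> :: "'a::chilbert"
  assumes S: "S \<in> closed_subspaces" and nz: "\<phi> \<noteq> 0"
  shows "ebar (ray \<phi>) S = 1 \<longleftrightarrow> \<phi> \<in> S"
proof -
  have S1: "csubspace S" and S2: "closed S" using S by (auto simp: closed_subspaces_def)
  define \<psi> where "\<psi> = (SOME \<psi>. \<psi> \<noteq> 0 \<and> ray \<psi> = ray \<phi>)"
  have "\<psi> \<noteq> 0 \<and> ray \<psi> = ray \<phi>" unfolding \<psi>_def by (rule someI[of _ \<phi>]) (use nz in simp)
  then have psi: "\<psi> \<noteq> 0" "ray \<psi> = ray \<phi>" by auto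
  have e: "ebar (ray \<phi>) S = (norm (proj S \<psi>))\<^sup>2 / (norm \<psi>)\<^sup>2"
    unfolding ebar_def \<psi>_def[symmetric] by simp
  have np: "(norm \<psi>)\<^sup>2 > 0" using psi by simp
  have "ebar (ray \<phi>) S = 1 \<longleftrightarrow> \<psi> \<in> S"
  proof
    assume "\<psi> \<in> S"
    then have "proj S \<psi> = \<psi>" by (intro proj_eq[OF S1]) auto
    then show "ebar (ray \<phi>) S = 1" using e np by simp
  next
    assume eq: "ebar (ray \<phi>) S = 1"
    obtain p where p: "p = proj S \<psi>" by simp
    have pp: "p \<in> S" "\<forall>s\<in>S. cinner s (\<psi> - p) = 0" using proj_exists[OF S1 S2, of \<psi>] p by auto
    have "\<psi> = p + (\<psi> - p)" by simp
    then have "(norm \<psi>)\<^sup>2 = (norm p)\<^sup>2 + (norm (\<psi> - p))\<^sup>2"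
      using norm_add_sq[of p "\<psi> - p"] pp by simp
    moreover have "(norm p)\<^sup>2 = (norm \<psi>)\<^sup>2" using eq e np p by (simp add: field_simps)
    ultimately have "\<psi> - p = 0" by simp
    then show "\<psi> \<in> S" using pp by simp
  qed
  then show ?thesis using ray_eq_mem[OF S1 psi(2)] by simp
qed

theorem lemma3p8:
  fixes f_low :: "'a::chilbert set \<Rightarrow> 'b::chilbert set"
    and f_up :: "'b set \<Rightarrow> 'a set"
  assumes "chu_morphism (rays :: 'a set set) (closed_subspaces :: 'a set set) ebar
                        (rays :: 'b set set) (closed_subspaces :: 'b set set) ebar f_low f_up"
  shows "\<forall>S \<in> (closed_subspaces :: 'a set set). \<forall>T \<in> (closed_subspaces :: 'b set set).
           (f_direct f_low S \<subseteq> T \<longleftrightarrow> S \<subseteq> f_up T)"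
proof (intro ballI)
  fix S :: "'a set" and T :: "'b set"
  assume S: "S \<in> closed_subspaces" and T: "T \<in> closed_subspaces"
  have m1: "\<And>x. x \<in> rays \<Longrightarrow> f_low x \<in> rays"
    and m2: "f_up T \<in> closed_subspaces"
    and m3: "\<And>x. x \<in> rays \<Longrightarrow> ebar x (f_up T) = ebar (f_low x) T"
    using assms T unfolding chu_morphism_def by auto
  have Tc: "csubspace T" and Uc: "csubspace (f_up T)" using T m2 by (auto simp: closed_subspaces_def)
  have key: "f_low (ray \<psi>) \<subseteq> T \<longleftrightarrow> \<psi> \<in> f_up T" if nz: "\<psi> \<noteq> 0" for \<psi>
  proof -
    have r: "ray \<psi> \<in> rays" using nz by (auto simp: rays_def)
    obtain \<phi> :: 'b where ph: "\<phi> \<noteq> 0" "f_low (ray \<psi>) = ray \<phi>"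
      using m1[OF r] by (auto simp: rays_def)
    have "f_low (ray \<psi>) \<subseteq> T \<longleftrightarrow> \<phi> \<in> T" using ph ray_subset_iff[OF Tc] by simp
    also have "\<dots> \<longleftrightarrow> ebar (f_low (ray \<psi>)) T = 1" using ebar_one_iff[OF T ph(1)] ph(2) by simp
    also have "\<dots> \<longleftrightarrow> ebar (ray \<psi>) (f_up T) = 1" using m3[OF r] by simp
    also have "\<dots> \<longleftrightarrow> \<psi> \<in> f_up T" using ebar_one_iff[OF m2 nz] .
    finally show ?thesis .
  qed
  define F where "F = {f_low (ray \<psi>) | \<psi>. \<psi> \<in> S \<and> \<psi> \<noteq> 0}"
  have "f_direct f_low S \<subseteq> T \<longleftrightarrow> (\<forall>A\<in>F. A \<subseteq> T)"
  proof
    assume h: "f_direct f_low S \<subseteq> T"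
    have "A \<subseteq> L_Sup F" if "A \<in> F" for A using that unfolding L_Sup_def by blast
    then show "\<forall>A\<in>F. A \<subseteq> T" using h unfolding f_direct_def F_def[symmetric] by (meson subset_trans)
  next
    assume "\<forall>A\<in>F. A \<subseteq> T"
    then show "f_direct f_low S \<subseteq> T" using T unfolding f_direct_def F_def[symmetric] L_Sup_def by blast
  qed
  also have "\<dots> \<longleftrightarrow> (\<forall>\<psi>\<in>S. \<psi> \<noteq> 0 \<longrightarrow> f_low (ray \<psi>) \<subseteq> T)" unfolding F_def by auto
  also have "\<dots> \<longleftrightarrow> (\<forall>\<psi>\<in>S. \<psi> \<noteq> 0 \<longrightarrow> \<psi> \<in> f_up T)" using key by simp
  also have "\<dots> \<longleftrightarrow> S \<subseteq> f_up T" using csub_zero[OF Uc] by auto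
  finally show "f_direct f_low S \<subseteq> T \<longleftrightarrow> S \<subseteq> f_up T" .
qed

end
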